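(* Let $S$ be a finite set of at least three points in the plane, $v>1$, and $s\in S$. Let $H_s$ be an axis-aligned speed-$v$ highway cross that minimizes $\max_{q\in S}t_{H}(s,q)$ over all axis-aligned speed-$v$ highway crosses $H$. Then the travel-time diameter $\max_{p,q\in S}t_{H_s}(p,q)$ is at most $2\delta_{\mathrm{opt}}$, where $\delta_{\mathrm{opt}}$ is the travel-time diameter of $S$ for an optimal axis-aligned speed-$v$ highway cross.
   Context: The underlying metric is the $L_1$-metric. An axis-aligned highway cross is the union $H$ of a horizontal and a vertical line; one travels with speed $1$ off $H$ ($L_1$-lengths) and with speed $v$ along either line of $H$. The travel time $t_H(p,q)$ is the minimum time of a path from $p$ to $q$; the travel-time diameter of $S$ is $\max_{p,q\in S}t_H(p,q)$, and an optimal highway cross minimizes it. *)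

theory Defs
  imports Complex_Main
begin

type_synonym pt = "real \<times> real"

definition l1 :: "pt \<Rightarrow> pt \<Rightarrow> real" where
  "l1 p q = \<bar>fst p - fst q\<bar> + \<bar>snd p - snd q\<bar>"

text \<open>An axis-aligned highway cross is given by its centre c: it is the union of the
  vertical line x = fst c and the horizontal line y = snd c.
  A segment from p to q lies on the highway iff both endpoints lie on the same line of the cross.\<close>
definition on_same_line :: "pt \<Rightarrow> pt \<Rightarrow> pt \<Rightarrow> bool" where
  "on_same_line c p q \<longleftrightarrow>
     (fst p = fst c \<and> fst q = fst c) \<or> (snd p = snd c \<and> snd q = snd c)"

definition seg_cost :: "real \<Rightarrow> pt \<Rightarrow> pt \<Rightarrow> pt \<Rightarrow> real" where
  "seg_cost v c p q = (if on_same_line c p q then l1 p q / v else l1 p q)"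

definition path_cost :: "real \<Rightarrow> pt \<Rightarrow> pt list \<Rightarrow> real" where
  "path_cost v c ps = sum_list (map2 (seg_cost v c) ps (tl ps))"

definition travel_time :: "real \<Rightarrow> pt \<Rightarrow> pt \<Rightarrow> pt \<Rightarrow> real" where
  "travel_time v c p q =
     Inf {path_cost v c ps | ps. ps \<noteq> [] \<and> hd ps = p \<and> last ps = q}"

definition ecc :: "real \<Rightarrow> pt \<Rightarrow> pt \<Rightarrow> pt set \<Rightarrow> real" where
  "ecc v c s S = Max ((\<lambda>q. travel_time v c s q) ` S)"

definition tt_diam :: "real \<Rightarrow> pt \<Rightarrow> pt set \<Rightarrow> real" where
  "tt_diam v c S = Max ((\<lambda>(p, q). travel_time v c p q) ` (S \<times> S))"

end

theory Submission
  imports Defs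
begin

lemma pc_nil: "path_cost v c [] = 0" by (simp add: path_cost_def)
lemma pc_single: "path_cost v c [x] = 0" by (simp add: path_cost_def)
lemma pc_cons2: "path_cost v c (x # y # ys) = seg_cost v c x y + path_cost v c (y # ys)"
  by (simp add: path_cost_def)

lemma seg_sym: "seg_cost v c p q = seg_cost v c q p"
  unfolding seg_cost_def on_same_line_def l1_def by (auto simp: abs_minus_commute)

lemma seg_nonneg: "v > 0 \<Longrightarrow> seg_cost v c p q \<ge> 0"
  unfolding seg_cost_def l1_def by auto

lemma pc_nonneg: "v > 0 \<Longrightarrow> path_cost v c ps \<ge> 0"
proof (induction ps)
  case Nil then show ?case by (simp add: pc_nil)
next
  case (Cons a ps)
  then show ?case
    by (cases ps) (auto simp: pc_single pc_cons2 intro: add_nonneg_nonneg seg_nonneg)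
qed

lemma pc_append: "ps \<noteq> [] \<Longrightarrow> qs \<noteq> [] \<Longrightarrow> last ps = hd qs \<Longrightarrow>
   path_cost v c (ps @ tl qs) = path_cost v c ps + path_cost v c qs"
proof (induction ps)
  case Nil then show ?case by simp
next
  case (Cons a ps)
  show ?case
  proof (cases ps)
    case Nil
    then show ?thesis using Cons.prems by (cases qs) (auto simp: pc_single)
  next
    case (Cons b rest)
    then have "path_cost v c ((a # ps) @ tl qs) = seg_cost v c a b + path_cost v c (ps @ tl qs)"
      by (simp add: pc_cons2)
    also have "\<dots> = seg_cost v c a b + path_cost v c ps + path_cost v c qs"
      using Cons.IH Cons.prems Cons by simp
    finally show ?thesis using Cons by (simp add: pc_cons2)
  qed
qed

lemma pc_snoc: "xs \<noteq> [] \<Longrightarrow> path_cost v c (xs @ [y]) = path_cost v c xs + seg_cost v c (last xs) y"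
  using pc_append[of xs "[last xs, y]" v c] by (simp add: pc_cons2 pc_single)

lemma pc_rev: "path_cost v c (rev ps) = path_cost v c ps"
proof (induction ps)
  case Nil then show ?case by simp
next
  case (Cons a ps)
  show ?case
  proof (cases ps)
    case Nil then show ?thesis by simp
  next
    case (Cons b rest)
    have "path_cost v c (rev (a # ps)) = path_cost v c (rev ps) + seg_cost v c (last (rev ps)) a"
      using pc_snoc[of "rev ps" v c a] Cons by simp
    also have "\<dots> = path_cost v c ps + seg_cost v c b a" using Cons.IH Cons by (simp add: last_rev)
    finally show ?thesis using Cons by (simp add: pc_cons2 seg_sym)
  qed
qed

definition PS where "PS v c p q = {path_cost v c ps | ps. ps \<noteq> [] \<and> hd ps = p \<and> last ps = q}"

lemma PS_ne: "PS v c p q \<noteq> {}"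
proof -
  have "path_cost v c [p,q] \<in> PS v c p q" unfolding PS_def by force
  then show ?thesis by blast
qed

lemma PS_bdd: "v > 0 \<Longrightarrow> bdd_below (PS v c p q)"
  unfolding PS_def bdd_below_def using pc_nonneg by blast

lemma tt_PS: "travel_time v c p q = Inf (PS v c p q)"
  unfolding travel_time_def PS_def by simp

lemma tt_le: "v > 0 \<Longrightarrow> ps \<noteq> [] \<Longrightarrow> hd ps = p \<Longrightarrow> last ps = q \<Longrightarrow>
  travel_time v c p q \<le> path_cost v c ps"
  unfolding tt_PS by (rule cInf_lower) (auto simp: PS_def intro: PS_bdd[unfolded PS_def])

lemma tt_sym: assumes "v > 0" shows "travel_time v c p q \<le> travel_time v c q p"
  unfolding tt_PS[of v c q p]
proof (rule cInf_greatest[OF PS_ne])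
  fix x assume "x \<in> PS v c q p"
  then obtain ps where ps: "ps \<noteq> []" "hd ps = q" "last ps = p" "x = path_cost v c ps"
    unfolding PS_def by blast
  show "travel_time v c p q \<le> x"
    using tt_le[OF assms, of "rev ps" p q c] ps by (simp add: pc_rev hd_rev last_rev)
qed

lemma tt_symeq: "v > 0 \<Longrightarrow> travel_time v c p q = travel_time v c q p"
  using tt_sym by (meson order_antisym)

lemma tt_tri: assumes "v > 0" shows "travel_time v c p r \<le> travel_time v c p q + travel_time v c q r"
proof -
  have "travel_time v c p r - travel_time v c q r \<le> travel_time v c p q"
    unfolding tt_PS[of v c p q]
  proof (rule cInf_greatest[OF PS_ne])
    fix x assume "x \<in> PS v c p q"
    then obtain ps where ps: "ps \<noteq> []" "hd ps = p" "last ps = q" "x = path_cost v c ps"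
      unfolding PS_def by blast
    have "travel_time v c p r - x \<le> travel_time v c q r"
      unfolding tt_PS[of v c q r]
    proof (rule cInf_greatest[OF PS_ne])
      fix y assume "y \<in> PS v c q r"
      then obtain qs where qs: "qs \<noteq> []" "hd qs = q" "last qs = r" "y = path_cost v c qs"
        unfolding PS_def by blast
      have "travel_time v c p r \<le> path_cost v c (ps @ tl qs)"
      proof (rule tt_le[OF assms])
        show "ps @ tl qs \<noteq> []" "hd (ps @ tl qs) = p" using ps(1,2) by auto
        show "last (ps @ tl qs) = r"
          using ps(3) qs(1-3) by (cases qs; cases "tl qs = []") (auto simp: last_append)
      qed
      also have "\<dots> = x + y" using pc_append[of ps qs v c] ps qs by simp
      finally show "travel_time v c p r - x \<le> y" by simp
    qed
    then show "travel_time v c p r - travel_time v c q r \<le> x" by simp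
  qed
  then show ?thesis by simp
qed

theorem lemma4:
  fixes S :: "pt set" and v :: real and s cs :: pt
  assumes "finite S" and "card S \<ge> 3" and "v > 1" and "s \<in> S"
    and "\<forall>c. ecc v cs s S \<le> ecc v c s S"
  shows "\<forall>c. tt_diam v cs S \<le> 2 * tt_diam v c S"
proof
  fix c
  have v0: "v > 0" using assms(3) by simp
  have fin: "finite (S \<times> S)" using assms(1) by simp
  have ecc_le: "ecc v c s S \<le> tt_diam v c S"
    unfolding ecc_def tt_diam_def
  proof (rule Max_mono)
    show "(\<lambda>q. travel_time v c s q) ` S \<subseteq> (\<lambda>(p, q). travel_time v c p q) ` (S \<times> S)"
      using assms(4) by force
    show "(\<lambda>q. travel_time v c s q) ` S \<noteq> {}" using assms(4) by blast
    show "finite ((\<lambda>(p, q). travel_time v c p q) ` (S \<times> S))" using fin by simp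
  qed
  have ecc_ge: "travel_time v cs s q \<le> ecc v cs s S" if "q \<in> S" for q
    unfolding ecc_def using that assms(1) by (intro Max_ge) auto
  have "tt_diam v cs S \<le> 2 * ecc v cs s S"
    unfolding tt_diam_def
  proof (subst Max_le_iff)
    show "finite ((\<lambda>(p, q). travel_time v cs p q) ` (S \<times> S))" using fin by simp
    show "(\<lambda>(p, q). travel_time v cs p q) ` (S \<times> S) \<noteq> {}" using assms(4) by blast
    show "\<forall>a\<in>(\<lambda>(p, q). travel_time v cs p q) ` (S \<times> S). a \<le> 2 * ecc v cs s S"
    proof clarsimp
      fix p q assume "p \<in> S" "q \<in> S"
      have "travel_time v cs p q \<le> travel_time v cs p s + travel_time v cs s q"
        by (rule tt_tri[OF v0])
      also have "\<dots> = travel_time v cs s p + travel_time v cs s q"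
        using tt_symeq[OF v0] by simp
      also have "\<dots> \<le> 2 * ecc v cs s S"
        using ecc_ge[OF \<open>p \<in> S\<close>] ecc_ge[OF \<open>q \<in> S\<close>] by simp
      finally show "travel_time v cs p q \<le> 2 * ecc v cs s S" .
    qed
  qed
  then show "tt_diam v cs S \<le> 2 * tt_diam v c S"
    using assms(5) ecc_le by (meson dual_order.trans mult_le_cancel_left_pos zero_less_numeral)
qed

end
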